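(* Let $\mathbf{I}$ be a $d$-system of ideals in a ring $R$, $A:=\mathscr{A}(R,\mathbf{I})$, and $T_j:=\bigoplus_{i=1}^d\mathbb{T}_{ij}$ for $1\le j\le d$. Then, as left $A$-modules, $T_j\cong Ae_1/(Af_{d+1-j}Ae_1)=(A/J_{d+1-j})e_1$ for all $1\le j\le d$.
   Context: A $d$-system of ideals in $R$ is a collection $\{I_{ij}\mid1\le i,j\le d+1\}$ of two-sided ideals with $I_{ij}I_{jk}\subset I_{ik}$ and $I_{ij}=R$ for $i\ge j$. $\mathscr{A}(R,\mathbf{I}):=\bigoplus_{1\le i,j\le d}X_{ij}$, $X_{ij}:=I_{ij}/I_{i,d+1}$, with multiplication $(x+I_{i,d+1})(y+I_{k,d+1})=\delta_{jk}(xy+I_{i,d+1})\in X_{il}$ for $x\in I_{ij},y\in I_{kl}$. Put $e_k:=1+I_{k,d+1}\in X_{kk}$, $f_j:=\sum_{k>j}e_k$ for $0\le j\le d$ ($f_d=0$), $J_j:=Af_jA$. Define $\mathbb{T}_{kl}:=R/I_{k,d+2-l}$ for $1\le k,l\le d$, with $A$ acting on $\bigoplus_{k}\mathbb{T}_{kl}$ by $(x+I_{i,d+1})\cdot(r+I_{k,d+2-l})=\delta_{jk}(xr+I_{i,d+2-l})\in\mathbb{T}_{il}$ for $x\in I_{ij}$, $r\in R$. *)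

theory Defs
  imports Main
begin

text \<open>The ring R is the whole carrier of a type of class ring with unit
  (not required to be nontrivial). Ideals are subsets of that type.\<close>

definition two_sided_ideal :: "'a::{ring,monoid_mult} set \<Rightarrow> bool" where
  "two_sided_ideal J \<longleftrightarrow> 0 \<in> J \<and> (\<forall>x\<in>J. \<forall>y\<in>J. x + y \<in> J) \<and> (\<forall>x\<in>J. - x \<in> J)
     \<and> (\<forall>x\<in>J. \<forall>r. r * x \<in> J \<and> x * r \<in> J)"

text \<open>A d-system of ideals, indices 1..d+1.  The condition I_ij I_jk \<subseteq> I_ik
  is written elementwise (equivalent to containment of the product ideal).\<close>
definition d_system :: "nat \<Rightarrow> (nat \<Rightarrow> nat \<Rightarrow> 'a::{ring,monoid_mult} set) \<Rightarrow> bool" where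
  "d_system d I \<longleftrightarrow>
     (\<forall>i j. 1 \<le> i \<and> i \<le> d + 1 \<and> 1 \<le> j \<and> j \<le> d + 1 \<longrightarrow> two_sided_ideal (I i j))
   \<and> (\<forall>i j k. 1 \<le> i \<and> i \<le> d + 1 \<and> 1 \<le> j \<and> j \<le> d + 1 \<and> 1 \<le> k \<and> k \<le> d + 1 \<longrightarrow>
        (\<forall>x\<in>I i j. \<forall>y\<in>I j k. x * y \<in> I i k))
   \<and> (\<forall>i j. 1 \<le> i \<and> i \<le> d + 1 \<and> 1 \<le> j \<and> j \<le> d + 1 \<and> j \<le> i \<longrightarrow> I i j = UNIV)"

definition cos :: "'a::plus set \<Rightarrow> 'a \<Rightarrow> 'a set" where
  "cos S x = (\<lambda>s. x + s) ` S"

definition rep :: "'b set \<Rightarrow> 'b" where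
  "rep S = (SOME x. x \<in> S)"

definition inr :: "nat \<Rightarrow> nat \<Rightarrow> nat \<Rightarrow> bool" where
  "inr d i j \<longleftrightarrow> 1 \<le> i \<and> i \<le> d \<and> 1 \<le> j \<and> j \<le> d"

subsection \<open>The algebra A = A(R,I): d x d arrays, entry (i,j) in X_ij = I_ij / I_{i,d+1}\<close>

definition clsA :: "nat \<Rightarrow> (nat \<Rightarrow> nat \<Rightarrow> 'a::{ring,monoid_mult} set) \<Rightarrow> (nat \<Rightarrow> nat \<Rightarrow> 'a) \<Rightarrow> nat \<Rightarrow> nat \<Rightarrow> 'a set" where
  "clsA d I x = (\<lambda>i j. if inr d i j then cos (I i (d + 1)) (x i j) else {0})"

definition carrierA :: "nat \<Rightarrow> (nat \<Rightarrow> nat \<Rightarrow> 'a::{ring,monoid_mult} set) \<Rightarrow> (nat \<Rightarrow> nat \<Rightarrow> 'a set) set" where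
  "carrierA d I = {clsA d I x | x. \<forall>i j. inr d i j \<longrightarrow> x i j \<in> I i j}"

definition zeroA :: "nat \<Rightarrow> (nat \<Rightarrow> nat \<Rightarrow> 'a::{ring,monoid_mult} set) \<Rightarrow> nat \<Rightarrow> nat \<Rightarrow> 'a set" where
  "zeroA d I = clsA d I (\<lambda>i j. 0)"

definition addA :: "nat \<Rightarrow> (nat \<Rightarrow> nat \<Rightarrow> 'a::{ring,monoid_mult} set) \<Rightarrow> (nat \<Rightarrow> nat \<Rightarrow> 'a set) \<Rightarrow> (nat \<Rightarrow> nat \<Rightarrow> 'a set) \<Rightarrow> nat \<Rightarrow> nat \<Rightarrow> 'a set" where
  "addA d I a b = clsA d I (\<lambda>i j. rep (a i j) + rep (b i j))"

text \<open>(x + I_{i,d+1})(y + I_{k,d+1}) = delta_jk (xy + I_{i,d+1}), extended bilinearly.\<close>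
definition mulA :: "nat \<Rightarrow> (nat \<Rightarrow> nat \<Rightarrow> 'a::{ring,monoid_mult} set) \<Rightarrow> (nat \<Rightarrow> nat \<Rightarrow> 'a set) \<Rightarrow> (nat \<Rightarrow> nat \<Rightarrow> 'a set) \<Rightarrow> nat \<Rightarrow> nat \<Rightarrow> 'a set" where
  "mulA d I a b = clsA d I (\<lambda>i l. \<Sum>j\<in>{1..d}. rep (a i j) * rep (b j l))"

definition sumA :: "nat \<Rightarrow> (nat \<Rightarrow> nat \<Rightarrow> 'a::{ring,monoid_mult} set) \<Rightarrow> (nat \<Rightarrow> nat \<Rightarrow> 'a set) list \<Rightarrow> nat \<Rightarrow> nat \<Rightarrow> 'a set" where
  "sumA d I xs = foldr (addA d I) xs (zeroA d I)"

definition eA :: "nat \<Rightarrow> (nat \<Rightarrow> nat \<Rightarrow> 'a::{ring,monoid_mult} set) \<Rightarrow> nat \<Rightarrow> nat \<Rightarrow> nat \<Rightarrow> 'a set" where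
  "eA d I k = clsA d I (\<lambda>i j. if i = k \<and> j = k then 1 else 0)"

definition fA :: "nat \<Rightarrow> (nat \<Rightarrow> nat \<Rightarrow> 'a::{ring,monoid_mult} set) \<Rightarrow> nat \<Rightarrow> nat \<Rightarrow> nat \<Rightarrow> 'a set" where
  "fA d I j = sumA d I (map (eA d I) [Suc j..<Suc d])"

text \<open>J_j = A f_j A: all finite sums of products a f_j b.\<close>
definition JA :: "nat \<Rightarrow> (nat \<Rightarrow> nat \<Rightarrow> 'a::{ring,monoid_mult} set) \<Rightarrow> nat \<Rightarrow> (nat \<Rightarrow> nat \<Rightarrow> 'a set) set" where
  "JA d I j = {sumA d I (map (\<lambda>(a, b). mulA d I (mulA d I a (fA d I j)) b) ps) | ps.
                 set ps \<subseteq> carrierA d I \<times> carrierA d I}"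

subsection \<open>The left A-module T_l = direct sum over k of T_kl = R / I_{k,d+2-l}\<close>

definition clsT :: "nat \<Rightarrow> (nat \<Rightarrow> nat \<Rightarrow> 'a::{ring,monoid_mult} set) \<Rightarrow> nat \<Rightarrow> (nat \<Rightarrow> 'a) \<Rightarrow> nat \<Rightarrow> 'a set" where
  "clsT d I l y = (\<lambda>k. if 1 \<le> k \<and> k \<le> d then cos (I k (d + 2 - l)) (y k) else {0})"

definition carrierT :: "nat \<Rightarrow> (nat \<Rightarrow> nat \<Rightarrow> 'a::{ring,monoid_mult} set) \<Rightarrow> nat \<Rightarrow> (nat \<Rightarrow> 'a set) set" where
  "carrierT d I l = range (clsT d I l)"

definition addT :: "nat \<Rightarrow> (nat \<Rightarrow> nat \<Rightarrow> 'a::{ring,monoid_mult} set) \<Rightarrow> nat \<Rightarrow> (nat \<Rightarrow> 'a set) \<Rightarrow> (nat \<Rightarrow> 'a set) \<Rightarrow> nat \<Rightarrow> 'a set" where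
  "addT d I l s t = clsT d I l (\<lambda>k. rep (s k) + rep (t k))"

text \<open>(x + I_{i,d+1}) (r + I_{k,d+2-l}) = delta_jk (x r + I_{i,d+2-l}), extended bilinearly.\<close>
definition actT :: "nat \<Rightarrow> (nat \<Rightarrow> nat \<Rightarrow> 'a::{ring,monoid_mult} set) \<Rightarrow> nat \<Rightarrow> (nat \<Rightarrow> nat \<Rightarrow> 'a set) \<Rightarrow> (nat \<Rightarrow> 'a set) \<Rightarrow> nat \<Rightarrow> 'a set" where
  "actT d I l a t = clsT d I l (\<lambda>i. \<Sum>k\<in>{1..d}. rep (a i k) * rep (t k))"

definition Ae1 :: "nat \<Rightarrow> (nat \<Rightarrow> nat \<Rightarrow> 'a::{ring,monoid_mult} set) \<Rightarrow> (nat \<Rightarrow> nat \<Rightarrow> 'a set) set" where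
  "Ae1 d I = {mulA d I a (eA d I 1) | a. a \<in> carrierA d I}"

text \<open>A f_m A e_1 = J_m e_1 (finite sums of products a f_m b e_1).\<close>
definition subN :: "nat \<Rightarrow> (nat \<Rightarrow> nat \<Rightarrow> 'a::{ring,monoid_mult} set) \<Rightarrow> nat \<Rightarrow> (nat \<Rightarrow> nat \<Rightarrow> 'a set) set" where
  "subN d I m = {mulA d I x (eA d I 1) | x. x \<in> JA d I m}"

definition cosQ :: "nat \<Rightarrow> (nat \<Rightarrow> nat \<Rightarrow> 'a::{ring,monoid_mult} set) \<Rightarrow> nat \<Rightarrow> (nat \<Rightarrow> nat \<Rightarrow> 'a set) \<Rightarrow> (nat \<Rightarrow> nat \<Rightarrow> 'a set) set" where
  "cosQ d I m u = {addA d I u n | n. n \<in> subN d I m}"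

definition carrierQ :: "nat \<Rightarrow> (nat \<Rightarrow> nat \<Rightarrow> 'a::{ring,monoid_mult} set) \<Rightarrow> nat \<Rightarrow> (nat \<Rightarrow> nat \<Rightarrow> 'a set) set set" where
  "carrierQ d I m = cosQ d I m ` Ae1 d I"

definition addQ :: "nat \<Rightarrow> (nat \<Rightarrow> nat \<Rightarrow> 'a::{ring,monoid_mult} set) \<Rightarrow> nat \<Rightarrow> (nat \<Rightarrow> nat \<Rightarrow> 'a set) set \<Rightarrow> (nat \<Rightarrow> nat \<Rightarrow> 'a set) set \<Rightarrow> (nat \<Rightarrow> nat \<Rightarrow> 'a set) set" where
  "addQ d I m X Y = cosQ d I m (addA d I (rep X) (rep Y))"

definition actQ :: "nat \<Rightarrow> (nat \<Rightarrow> nat \<Rightarrow> 'a::{ring,monoid_mult} set) \<Rightarrow> nat \<Rightarrow> (nat \<Rightarrow> nat \<Rightarrow> 'a set) \<Rightarrow> (nat \<Rightarrow> nat \<Rightarrow> 'a set) set \<Rightarrow> (nat \<Rightarrow> nat \<Rightarrow> 'a set) set" where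
  "actQ d I m a X = cosQ d I m (mulA d I a (rep X))"

definition lmod_iso :: "'r set \<Rightarrow> 'm set \<Rightarrow> ('m \<Rightarrow> 'm \<Rightarrow> 'm) \<Rightarrow> ('r \<Rightarrow> 'm \<Rightarrow> 'm)
    \<Rightarrow> 'n set \<Rightarrow> ('n \<Rightarrow> 'n \<Rightarrow> 'n) \<Rightarrow> ('r \<Rightarrow> 'n \<Rightarrow> 'n) \<Rightarrow> ('m \<Rightarrow> 'n) \<Rightarrow> bool" where
  "lmod_iso Ar M addM actM N addN actN \<phi> \<longleftrightarrow>
     bij_betw \<phi> M N
   \<and> (\<forall>x\<in>M. \<forall>y\<in>M. \<phi> (addM x y) = addN (\<phi> x) (\<phi> y))
   \<and> (\<forall>a\<in>Ar. \<forall>x\<in>M. \<phi> (actM a x) = actN a (\<phi> x))"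

end

theory Submission imports Defs begin

lemma ideal_0: "two_sided_ideal J \<Longrightarrow> 0 \<in> J" by (simp add: two_sided_ideal_def)
lemma ideal_add: "two_sided_ideal J \<Longrightarrow> x \<in> J \<Longrightarrow> y \<in> J \<Longrightarrow> x + y \<in> J" by (simp add: two_sided_ideal_def)
lemma ideal_neg: "two_sided_ideal J \<Longrightarrow> x \<in> J \<Longrightarrow> - x \<in> J" by (simp add: two_sided_ideal_def)
lemma ideal_diff: "two_sided_ideal J \<Longrightarrow> x \<in> J \<Longrightarrow> y \<in> J \<Longrightarrow> x - y \<in> J"
  by (metis diff_conv_add_uminus ideal_add ideal_neg)
lemma ideal_multL: "two_sided_ideal J \<Longrightarrow> x \<in> J \<Longrightarrow> r * x \<in> J" by (simp add: two_sided_ideal_def)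
lemma ideal_multR: "two_sided_ideal J \<Longrightarrow> x \<in> J \<Longrightarrow> x * r \<in> J" by (simp add: two_sided_ideal_def)
lemma ideal_sum: assumes "two_sided_ideal J" "\<And>k. k\<in>K \<Longrightarrow> f k \<in> J" shows "sum f K \<in> J"
proof (cases "finite K")
  case True thus ?thesis using assms(2)
    by (induction K rule: finite_induct) (auto simp: ideal_0[OF assms(1)] ideal_add[OF assms(1)])
next
  case False thus ?thesis using ideal_0[OF assms(1)] by simp
qed

lemma cos_eq: assumes "two_sided_ideal S" shows "cos S x = cos S y \<longleftrightarrow> x - y \<in> S"
proof
  assume "cos S x = cos S y"
  moreover have "x \<in> cos S x" unfolding cos_def using ideal_0[OF assms] by (metis add_0_right image_eqI)
  ultimately obtain s where "s \<in> S" "x = y + s" unfolding cos_def by auto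
  thus "x - y \<in> S" by simp
next
  assume h: "x - y \<in> S"
  show "cos S x = cos S y"
  proof
    show "cos S x \<subseteq> cos S y" unfolding cos_def
    proof
      fix z assume "z \<in> (+) x ` S" then obtain s where s: "s \<in> S" "z = x + s" by auto
      have "z = y + ((x - y) + s)" using s by (simp add: algebra_simps)
      thus "z \<in> (+) y ` S" using ideal_add[OF assms h s(1)] by blast
    qed
    show "cos S y \<subseteq> cos S x" unfolding cos_def
    proof
      fix z assume "z \<in> (+) y ` S" then obtain s where s: "s \<in> S" "z = y + s" by auto
      have "z = x + (- (x - y) + s)" using s by (simp add: algebra_simps)
      thus "z \<in> (+) x ` S" using ideal_add[OF assms ideal_neg[OF assms h] s(1)] by blast
    qed
  qed
qed

lemma rep_cos: assumes "two_sided_ideal S" shows "rep (cos S x) - x \<in> S"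
proof -
  have "x \<in> cos S x" unfolding cos_def using ideal_0[OF assms] by (metis add_0_right image_eqI)
  hence "rep (cos S x) \<in> cos S x" unfolding rep_def by (rule someI)
  then obtain s where "s \<in> S" "rep (cos S x) = x + s" unfolding cos_def by auto
  thus ?thesis by simp
qed

definition col :: "nat \<Rightarrow> (nat \<Rightarrow> nat \<Rightarrow> 'a::{ring,monoid_mult} set) \<Rightarrow> (nat \<Rightarrow> 'a) \<Rightarrow> nat \<Rightarrow> nat \<Rightarrow> 'a set" where
  "col d I y = clsA d I (\<lambda>i k. if k = 1 then y i else 0)"

context
  fixes d :: nat and I :: "nat \<Rightarrow> nat \<Rightarrow> 'a::{ring,monoid_mult} set"
  assumes ds: "d_system d I"
begin

lemma isI: "1 \<le> i \<Longrightarrow> i \<le> d+1 \<Longrightarrow> 1 \<le> j \<Longrightarrow> j \<le> d+1 \<Longrightarrow> two_sided_ideal (I i j)"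
  using ds unfolding d_system_def by blast
lemma prodI: "1 \<le> i \<Longrightarrow> i \<le> d+1 \<Longrightarrow> 1 \<le> j \<Longrightarrow> j \<le> d+1 \<Longrightarrow> 1 \<le> k \<Longrightarrow> k \<le> d+1 \<Longrightarrow>
   x \<in> I i j \<Longrightarrow> y \<in> I j k \<Longrightarrow> x * y \<in> I i k"
  using ds unfolding d_system_def by blast
lemma univI: "1 \<le> j \<Longrightarrow> j \<le> i \<Longrightarrow> i \<le> d+1 \<Longrightarrow> I i j = UNIV"
  using ds unfolding d_system_def by auto
lemma monoI: "1 \<le> i \<Longrightarrow> i \<le> d+1 \<Longrightarrow> 1 \<le> k' \<Longrightarrow> k' \<le> k \<Longrightarrow> k \<le> d+1 \<Longrightarrow> x \<in> I i k \<Longrightarrow> x \<in> I i k'"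
proof -
  assume a: "1 \<le> i" "i \<le> d+1" "1 \<le> k'" "k' \<le> k" "k \<le> d+1" "x \<in> I i k"
  have "(1::'a) \<in> I k k'" using univI[of k' k] a by simp
  from prodI[OF a(1,2) _ a(5) a(3) _ a(6) this] a have "x * 1 \<in> I i k'" by simp
  thus ?thesis by simp
qed

lemma key: assumes "1 \<le> i" "i \<le> d" "1 \<le> k" "k \<le> d" "1 \<le> D" "D \<le> d+1"
  "x \<in> I i k" "r - x \<in> I i (d+1)" "p - q \<in> I k D"
  shows "r * p - x * q \<in> I i D"
proof -
  have e: "r * p - x * q = (r - x) * p + x * (p - q)" by (simp add: algebra_simps)
  have 1: "(r - x) * p \<in> I i D"
    using monoI[of i D "d+1"] ideal_multR[OF isI[of i "d+1"] assms(8)] assms by simp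
  have 2: "x * (p - q) \<in> I i D" using prodI[of i k D] assms by simp
  show ?thesis unfolding e using ideal_add[OF isI 1 2] assms by simp
qed


lemma isI': "inr d i j \<Longrightarrow> two_sided_ideal (I i (d+1))" unfolding inr_def by (rule isI) auto

lemma clsA_eq: "(\<And>i j. inr d i j \<Longrightarrow> x i j - y i j \<in> I i (d+1)) \<Longrightarrow> clsA d I x = clsA d I y"
proof -
  assume h: "\<And>i j. inr d i j \<Longrightarrow> x i j - y i j \<in> I i (d+1)"
  show ?thesis
  proof (intro ext)
    fix i j show "clsA d I x i j = clsA d I y i j"
    proof (cases "inr d i j")
      case True
      have "cos (I i (d+1)) (x i j) = cos (I i (d+1)) (y i j)" using cos_eq[OF isI'[OF True]] h[OF True] by blast
      thus ?thesis unfolding clsA_def using True by simp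
    qed (simp add: clsA_def)
  qed
qed

lemma clsA_eq_iff: "clsA d I x = clsA d I y \<longleftrightarrow> (\<forall>i j. inr d i j \<longrightarrow> x i j - y i j \<in> I i (d+1))"
proof
  assume h: "clsA d I x = clsA d I y"
  show "\<forall>i j. inr d i j \<longrightarrow> x i j - y i j \<in> I i (d+1)"
  proof (intro allI impI)
    fix i j assume r: "inr d i j"
    from h have "clsA d I x i j = clsA d I y i j" by simp
    hence "cos (I i (d+1)) (x i j) = cos (I i (d+1)) (y i j)" using r unfolding clsA_def by simp
    thus "x i j - y i j \<in> I i (d+1)" using cos_eq[OF isI'[OF r]] by blast
  qed
qed (auto intro: clsA_eq)

lemma rep_clsA: "inr d i j \<Longrightarrow> rep (clsA d I x i j) - x i j \<in> I i (d+1)"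
  unfolding clsA_def using rep_cos[OF isI'] by simp

lemma addA_cls: "addA d I (clsA d I x) (clsA d I y) = clsA d I (\<lambda>i j. x i j + y i j)"
  unfolding addA_def
proof (rule clsA_eq)
  fix i j assume r: "inr d i j"
  have e: "rep (clsA d I x i j) + rep (clsA d I y i j) - (x i j + y i j)
      = (rep (clsA d I x i j) - x i j) + (rep (clsA d I y i j) - y i j)" by (simp add: algebra_simps)
  show "rep (clsA d I x i j) + rep (clsA d I y i j) - (x i j + y i j) \<in> I i (d + 1)"
    unfolding e by (rule ideal_add[OF isI'[OF r] rep_clsA[OF r] rep_clsA[OF r]])
qed

lemma mulA_cls: assumes "\<And>i j. inr d i j \<Longrightarrow> x i j \<in> I i j"
  shows "mulA d I (clsA d I x) (clsA d I y) = clsA d I (\<lambda>i l. \<Sum>j\<in>{1..d}. x i j * y j l)"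
  unfolding mulA_def
proof (rule clsA_eq)
  fix i l assume r: "inr d i l"
  have "(\<Sum>j\<in>{1..d}. rep (clsA d I x i j) * rep (clsA d I y j l)) - (\<Sum>j\<in>{1..d}. x i j * y j l)
     = (\<Sum>j\<in>{1..d}. rep (clsA d I x i j) * rep (clsA d I y j l) - x i j * y j l)"
    by (simp add: sum_subtractf)
  also have "\<dots> \<in> I i (d+1)"
  proof (rule ideal_sum[OF isI'[OF r]])
    fix j assume j: "j \<in> {1..d}"
    have rij: "inr d i j" "inr d j l" using r j unfolding inr_def by auto
    show "rep (clsA d I x i j) * rep (clsA d I y j l) - x i j * y j l \<in> I i (d + 1)"
      apply (rule key)
      using rij assms[OF rij(1)] rep_clsA[OF rij(1)] rep_clsA[OF rij(2)] unfolding inr_def by auto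
  qed
  finally show "(\<Sum>j\<in>{1..d}. rep (clsA d I x i j) * rep (clsA d I y j l)) - (\<Sum>j\<in>{1..d}. x i j * y j l) \<in> I i (d+1)" .
qed

lemma col_eq_iff: "col d I y = col d I y' \<longleftrightarrow> (\<forall>i\<in>{1..d}. y i - y' i \<in> I i (d+1))"
  unfolding col_def clsA_eq_iff
proof safe
  fix i assume h: "\<forall>i j. inr d i j \<longrightarrow> (if j = 1 then y i else 0) - (if j = 1 then y' i else 0) \<in> I i (d + 1)"
    and i: "i \<in> {1..d}"
  have "d \<ge> 1" using i by auto
  with i have "inr d i 1" unfolding inr_def by auto
  from h[rule_format, OF this] show "y i - y' i \<in> I i (d+1)" by simp
next
  fix i j assume h: "\<forall>i\<in>{1..d}. y i - y' i \<in> I i (d + 1)" and r: "inr d i j"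
  show "(if j = 1 then y i else 0) - (if j = 1 then y' i else 0) \<in> I i (d + 1)"
    using h r ideal_0[OF isI'[OF r]] unfolding inr_def by auto
qed

lemma carrierA_E: "a \<in> carrierA d I \<Longrightarrow> (\<And>x. a = clsA d I x \<Longrightarrow> (\<And>i j. inr d i j \<Longrightarrow> x i j \<in> I i j) \<Longrightarrow> P) \<Longrightarrow> P"
  unfolding carrierA_def by blast

lemma col_carrier: "col d I y \<in> carrierA d I"
  unfolding carrierA_def col_def
proof (intro CollectI exI conjI allI impI, rule refl)
  fix i j assume r: "inr d i j"
  show "(if j = 1 then y i else 0) \<in> I i j"
  proof (cases "j = 1")
    case True thus ?thesis using univI[of 1 i] r unfolding inr_def by auto
  next
    case False thus ?thesis using ideal_0[OF isI[of i j]] r unfolding inr_def by auto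
  qed
qed

lemma mulA_e1: assumes "\<And>i j. inr d i j \<Longrightarrow> x i j \<in> I i j" "1 \<le> d"
  shows "mulA d I (clsA d I x) (eA d I 1) = col d I (\<lambda>i. x i 1)"
proof -
  have "mulA d I (clsA d I x) (eA d I 1) = clsA d I (\<lambda>i l. \<Sum>j\<in>{1..d}. x i j * (if j = 1 \<and> l = 1 then 1 else 0))"
    unfolding eA_def using mulA_cls[OF assms(1)] by blast
  also have "\<dots> = col d I (\<lambda>i. x i 1)" unfolding col_def
  proof (rule clsA_eq)
    fix i l assume r: "inr d i l"
    have "(\<Sum>j\<in>{1..d}. x i j * (if j = 1 \<and> l = 1 then 1 else 0)) = (\<Sum>j\<in>{1..d}. if j = 1 then (if l = 1 then x i 1 else 0) else 0)"
      by (rule sum.cong) auto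
    also have "\<dots> = (if l = 1 then x i 1 else 0)" using assms(2) by (simp add: sum.delta)
    finally show "(\<Sum>j\<in>{1..d}. x i j * (if j = 1 \<and> l = 1 then 1 else 0)) - (if l = 1 then x i 1 else 0) \<in> I i (d + 1)"
      using ideal_0[OF isI'[OF r]] by simp
  qed
  finally show ?thesis .
qed

lemma sumA_eA: "distinct ks \<Longrightarrow> sumA d I (map (eA d I) ks) = clsA d I (\<lambda>i j. if i = j \<and> i \<in> set ks then 1 else 0)"
proof (induction ks)
  case Nil
  show ?case unfolding sumA_def zeroA_def by simp
next
  case (Cons k ks)
  have "sumA d I (map (eA d I) (k # ks)) = addA d I (eA d I k) (sumA d I (map (eA d I) ks))"
    unfolding sumA_def by simp
  also have "\<dots> = clsA d I (\<lambda>i j. (if i = k \<and> j = k then 1 else 0) + (if i = j \<and> i \<in> set ks then 1 else 0))"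
    using Cons unfolding eA_def by (simp add: addA_cls)
  also have "\<dots> = clsA d I (\<lambda>i j. if i = j \<and> i \<in> set (k # ks) then 1 else 0)"
    using Cons.prems by (intro arg_cong[where f="clsA d I"] ext) auto
  finally show ?case .
qed

lemma fA_cls: "fA d I m = clsA d I (\<lambda>i j. if i = j \<and> m < i then 1 else 0)"
  unfolding fA_def
proof (subst sumA_eA, simp, rule clsA_eq)
  fix i j assume r: "inr d i j"
  hence "(i \<in> set [Suc m..<Suc d]) = (m < i)" unfolding inr_def by auto
  thus "(if i = j \<and> i \<in> set [Suc m..<Suc d] then 1 else 0) - (if i = j \<and> m < i then 1 else 0) \<in> I i (d + 1)"
    using ideal_0[OF isI'[OF r]] by simp
qed

lemma mulA_fA: assumes "\<And>i j. inr d i j \<Longrightarrow> x i j \<in> I i j"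
  shows "mulA d I (clsA d I x) (fA d I m) = clsA d I (\<lambda>i l. if m < l then x i l else 0)"
proof -
  have "mulA d I (clsA d I x) (fA d I m) = clsA d I (\<lambda>i l. \<Sum>j\<in>{1..d}. x i j * (if j = l \<and> m < j then 1 else 0))"
    unfolding fA_cls using mulA_cls[OF assms(1)] by blast
  also have "\<dots> = clsA d I (\<lambda>i l. if m < l then x i l else 0)"
  proof (rule clsA_eq)
    fix i l assume r: "inr d i l"
    have "(\<Sum>j\<in>{1..d}. x i j * (if j = l \<and> m < j then 1 else 0)) = (\<Sum>j\<in>{1..d}. if j = l then (if m < l then x i l else 0) else 0)"
      by (rule sum.cong) auto
    also have "\<dots> = (if m < l then x i l else 0)" using r unfolding inr_def by (simp add: sum.delta)
    finally show "(\<Sum>j\<in>{1..d}. x i j * (if j = l \<and> m < j then 1 else 0)) - (if m < l then x i l else 0) \<in> I i (d + 1)"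
      using ideal_0[OF isI'[OF r]] by simp
  qed
  finally show ?thesis .
qed

lemma colfun_in: "inr d i j \<Longrightarrow> (if j = 1 then y i else 0) \<in> I i j"
proof (cases "j = 1")
  case True assume "inr d i j" thus ?thesis using True univI[of 1 i] unfolding inr_def by auto
next
  case False assume "inr d i j" thus ?thesis using False ideal_0[OF isI[of i j]] unfolding inr_def by auto
qed

lemma Ae1_eq: assumes "1 \<le> d" shows "Ae1 d I = range (col d I)"
proof
  show "Ae1 d I \<subseteq> range (col d I)"
  proof
    fix u assume "u \<in> Ae1 d I"
    then obtain a where a: "a \<in> carrierA d I" "u = mulA d I a (eA d I 1)" unfolding Ae1_def by blast
    from a(1) obtain x where x: "a = clsA d I x" "\<And>i j. inr d i j \<Longrightarrow> x i j \<in> I i j" unfolding carrierA_def by blast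
    show "u \<in> range (col d I)" using a(2) mulA_e1[OF x(2) assms] x(1) by simp
  qed
  show "range (col d I) \<subseteq> Ae1 d I"
  proof
    fix u assume "u \<in> range (col d I)"
    then obtain y where y: "u = col d I y" by blast
    have h: "\<And>i j. inr d i j \<Longrightarrow> (\<lambda>i j. if j = 1 then y i else 0) i j \<in> I i j" using colfun_in by simp
    have "mulA d I (clsA d I (\<lambda>i j. if j = 1 then y i else 0)) (eA d I 1) = col d I (\<lambda>i. (\<lambda>i j. if j = 1 then y i else 0) i 1)"
      using mulA_e1[of "\<lambda>i j. if j = 1 then y i else 0", OF h assms] by simp
    hence "mulA d I (col d I y) (eA d I 1) = col d I y" by (simp add: col_def)
    thus "u \<in> Ae1 d I" unfolding Ae1_def using y col_carrier[of y] by force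
  qed
qed

lemma term_in: assumes "inr d i k" "inr d k l" "\<And>i j. inr d i j \<Longrightarrow> x i j \<in> I i j" "m \<le> d"
  "\<And>i j. inr d i j \<Longrightarrow> y i j \<in> I i j"
  shows "(if m < k then x i k else 0) * y k l \<in> I i l \<and> (if m < k then x i k else 0) * y k l \<in> I i (m+1)"
proof (cases "m < k")
  case True
  have "x i k \<in> I i (m+1)" using monoI[of i "m+1" k] assms(1,3) True unfolding inr_def by auto
  moreover have "(1::'a) \<in> I k l \<or> True" by simp
  ultimately show ?thesis using True ideal_multR[OF isI[of i "m+1"]] prodI[of i k l] assms(1-5) unfolding inr_def
    by auto
next
  case False thus ?thesis using ideal_0[OF isI[of i l]] ideal_0[OF isI[of i "m+1"]] assms unfolding inr_def by auto
qed

lemma JA_inv: assumes "set ps \<subseteq> carrierA d I \<times> carrierA d I" "m \<le> d"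
  shows "\<exists>z. sumA d I (map (\<lambda>(a, b). mulA d I (mulA d I a (fA d I m)) b) ps) = clsA d I z
     \<and> (\<forall>i l. inr d i l \<longrightarrow> z i l \<in> I i l \<and> z i l \<in> I i (m+1))"
  using assms(1)
proof (induction ps)
  case Nil
  show ?case unfolding sumA_def zeroA_def
    by (rule exI[of _ "\<lambda>i j. 0"]) (use ideal_0[OF isI] assms(2) in \<open>auto simp: inr_def\<close>)
next
  case (Cons p ps)
  obtain a b where p: "p = (a, b)" by fastforce
  have ab: "a \<in> carrierA d I" "b \<in> carrierA d I" using Cons.prems p by auto
  obtain x where x: "a = clsA d I x" "\<And>i j. inr d i j \<Longrightarrow> x i j \<in> I i j" using ab(1) unfolding carrierA_def by blast
  obtain y where y: "b = clsA d I y" "\<And>i j. inr d i j \<Longrightarrow> y i j \<in> I i j" using ab(2) unfolding carrierA_def by blast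
  obtain z where z: "sumA d I (map (\<lambda>(a, b). mulA d I (mulA d I a (fA d I m)) b) ps) = clsA d I z"
    "\<forall>i l. inr d i l \<longrightarrow> z i l \<in> I i l \<and> z i l \<in> I i (m+1)" using Cons by auto
  have x': "\<And>i j. inr d i j \<Longrightarrow> (if m < j then x i j else 0) \<in> I i j"
    using x(2) ideal_0[OF isI] unfolding inr_def by auto
  define w where "w = (\<lambda>i l. \<Sum>k\<in>{1..d}. (if m < k then x i k else 0) * y k l)"
  have "mulA d I a (fA d I m) = clsA d I (\<lambda>i l. if m < l then x i l else 0)"
    unfolding x(1) by (rule mulA_fA[OF x(2)])
  moreover have "mulA d I (clsA d I (\<lambda>i l. if m < l then x i l else 0)) b = clsA d I w"
    unfolding y(1) w_def by (rule mulA_cls) (rule x')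
  ultimately have mw: "mulA d I (mulA d I a (fA d I m)) b = clsA d I w" by simp
  have win: "w i l \<in> I i l \<and> w i l \<in> I i (m+1)" if r: "inr d i l" for i l
  proof -
    have ii: "two_sided_ideal (I i l)" "two_sided_ideal (I i (m+1))" using r assms(2) isI unfolding inr_def by auto
    have t: "(if m < k then x i k else 0) * y k l \<in> I i l \<and> (if m < k then x i k else 0) * y k l \<in> I i (m+1)"
      if k: "k \<in> {1..d}" for k
    proof -
      have "inr d i k" "inr d k l" using r k unfolding inr_def by auto
      thus ?thesis by (rule term_in[OF _ _ x(2) assms(2) y(2)])
    qed
    have 1: "w i l \<in> I i l" unfolding w_def by (rule ideal_sum[OF ii(1)]) (rule conjunct1[OF t])
    have 2: "w i l \<in> I i (m+1)" unfolding w_def by (rule ideal_sum[OF ii(2)]) (rule conjunct2[OF t])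
    show ?thesis using 1 2 by blast
  qed
  have "sumA d I (map (\<lambda>(a, b). mulA d I (mulA d I a (fA d I m)) b) (p # ps))
     = addA d I (clsA d I w) (clsA d I z)" using mw z(1) p unfolding sumA_def by simp
  also have "\<dots> = clsA d I (\<lambda>i j. w i j + z i j)" by (rule addA_cls)
  finally have e: "sumA d I (map (\<lambda>(a, b). mulA d I (mulA d I a (fA d I m)) b) (p # ps)) = clsA d I (\<lambda>i j. w i j + z i j)" .
  have "\<forall>i l. inr d i l \<longrightarrow> w i l + z i l \<in> I i l \<and> w i l + z i l \<in> I i (m+1)"
  proof (intro allI impI)
    fix i l assume r: "inr d i l"
    have ii: "two_sided_ideal (I i l)" "two_sided_ideal (I i (m+1))" using r assms(2) isI unfolding inr_def by auto
    show "w i l + z i l \<in> I i l \<and> w i l + z i l \<in> I i (m+1)"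
      using ideal_add[OF ii(1)] ideal_add[OF ii(2)] win[OF r] z(2) r by blast
  qed
  with e show ?case by blast
qed

lemma addA_col: "addA d I (col d I y) (col d I z) = col d I (\<lambda>i. y i + z i)"
  unfolding col_def addA_cls by (intro arg_cong[where f="clsA d I"] ext) simp

lemma mulA_col: assumes "\<And>i j. inr d i j \<Longrightarrow> x i j \<in> I i j"
  shows "mulA d I (clsA d I x) (col d I y) = col d I (\<lambda>i. \<Sum>k\<in>{1..d}. x i k * y k)"
proof -
  have "mulA d I (clsA d I x) (col d I y) = clsA d I (\<lambda>i l. \<Sum>k\<in>{1..d}. x i k * (if l = 1 then y k else 0))"
    unfolding col_def using mulA_cls[OF assms] by blast
  also have "\<dots> = col d I (\<lambda>i. \<Sum>k\<in>{1..d}. x i k * y k)"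
    unfolding col_def by (intro arg_cong[where f="clsA d I"] ext) simp
  finally show ?thesis .
qed

lemma mulA_col_e1: assumes "1 \<le> d" shows "mulA d I (col d I y) (eA d I 1) = col d I y"
proof -
  have h: "\<And>i j. inr d i j \<Longrightarrow> (\<lambda>i j. if j = 1 then y i else 0) i j \<in> I i j" using colfun_in by simp
  have "mulA d I (clsA d I (\<lambda>i j. if j = 1 then y i else 0)) (eA d I 1) = col d I (\<lambda>i. (\<lambda>i j. if j = 1 then y i else 0) i 1)"
    using mulA_e1[of "\<lambda>i j. if j = 1 then y i else 0", OF h assms] by simp
  thus ?thesis by (simp add: col_def)
qed

lemma subN_eq: assumes "m \<le> d" "1 \<le> d"
  shows "subN d I m = {col d I y | y. \<forall>i\<in>{1..d}. y i \<in> I i (m+1)}"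
proof
  show "subN d I m \<subseteq> {col d I y | y. \<forall>i\<in>{1..d}. y i \<in> I i (m+1)}"
  proof
    fix u assume "u \<in> subN d I m"
    then obtain ps where u: "u = mulA d I (sumA d I (map (\<lambda>(a, b). mulA d I (mulA d I a (fA d I m)) b) ps)) (eA d I 1)"
      and ps: "set ps \<subseteq> carrierA d I \<times> carrierA d I" unfolding subN_def JA_def by blast
    obtain z where z: "sumA d I (map (\<lambda>(a, b). mulA d I (mulA d I a (fA d I m)) b) ps) = clsA d I z"
      "\<forall>i l. inr d i l \<longrightarrow> z i l \<in> I i l \<and> z i l \<in> I i (m+1)" using JA_inv[OF ps assms(1)] by blast
    have zz: "\<And>i j. inr d i j \<Longrightarrow> z i j \<in> I i j" using z(2) by blast
    have "u = col d I (\<lambda>i. z i 1)" unfolding u z(1) by (rule mulA_e1[OF zz assms(2)])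
    moreover have "\<forall>i\<in>{1..d}. z i 1 \<in> I i (m+1)" using z(2) assms(2) unfolding inr_def by auto
    ultimately show "u \<in> {col d I y | y. \<forall>i\<in>{1..d}. y i \<in> I i (m+1)}" by blast
  qed
next
  have zero: "col d I (\<lambda>i. 0) \<in> subN d I m"
  proof -
    have "zeroA d I \<in> JA d I m" unfolding JA_def
      by (rule CollectI, rule exI[of _ "[]"]) (simp add: sumA_def)
    moreover have "mulA d I (zeroA d I) (eA d I 1) = col d I (\<lambda>i. 0)"
      unfolding zeroA_def using mulA_e1[of "\<lambda>i j. 0", OF _ assms(2)] ideal_0[OF isI] unfolding inr_def by auto
    ultimately show ?thesis unfolding subN_def by force
  qed
  show "{col d I y | y. \<forall>i\<in>{1..d}. y i \<in> I i (m+1)} \<subseteq> subN d I m"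
  proof
    fix u assume "u \<in> {col d I y | y. \<forall>i\<in>{1..d}. y i \<in> I i (m+1)}"
    then obtain y where u: "u = col d I y" and y: "\<forall>i\<in>{1..d}. y i \<in> I i (m+1)" by blast
    show "u \<in> subN d I m"
    proof (cases "m = d")
      case True
      have "col d I y = col d I (\<lambda>i. 0)" unfolding col_eq_iff using y True by simp
      thus ?thesis using zero u by simp
    next
      case False
      hence md: "m + 1 \<le> d" using assms(1) by simp
      define xa where "xa = (\<lambda>i k. if k = m + 1 then y i else (0::'a))"
      define yb where "yb = (\<lambda>k (l::nat). if k = m + 1 \<and> l = 1 then 1 else (0::'a))"
      have xa: "\<And>i j. inr d i j \<Longrightarrow> xa i j \<in> I i j"
        unfolding xa_def using y ideal_0[OF isI] unfolding inr_def by auto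
      have yb: "\<And>i j. inr d i j \<Longrightarrow> yb i j \<in> I i j"
      proof -
        fix i j assume r: "inr d i j"
        show "yb i j \<in> I i j"
        proof (cases "i = m + 1 \<and> j = 1")
          case True thus ?thesis unfolding yb_def using univI[of 1 "m+1"] md by simp
        next
          case False thus ?thesis unfolding yb_def using ideal_0[OF isI[of i j]] r unfolding inr_def using False by auto
        qed
      qed
      have ca: "clsA d I xa \<in> carrierA d I" "clsA d I yb \<in> carrierA d I"
        unfolding carrierA_def using xa yb by blast+
      have "mulA d I (clsA d I xa) (fA d I m) = clsA d I (\<lambda>i l. if m < l then xa i l else 0)"
        by (rule mulA_fA[OF xa])
      also have "(\<lambda>i l. if m < l then xa i l else 0) = xa" unfolding xa_def by (intro ext) auto
      finally have 1: "mulA d I (clsA d I xa) (fA d I m) = clsA d I xa" .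
      have "mulA d I (clsA d I xa) (clsA d I yb) = clsA d I (\<lambda>i l. \<Sum>k\<in>{1..d}. xa i k * yb k l)"
        by (rule mulA_cls[OF xa])
      also have "\<dots> = col d I y" unfolding col_def
      proof (intro arg_cong[where f="clsA d I"] ext)
        fix i l
        have "(\<Sum>k\<in>{1..d}. xa i k * yb k l) = (\<Sum>k\<in>{1..d}. if k = m + 1 then (if l = 1 then y i else 0) else 0)"
          unfolding xa_def yb_def by (rule sum.cong) auto
        also have "\<dots> = (if l = 1 then y i else 0)" using md by (simp add: sum.delta)
        finally show "(\<Sum>k\<in>{1..d}. xa i k * yb k l) = (if l = 1 then y i else 0)" .
      qed
      finally have 2: "mulA d I (clsA d I xa) (clsA d I yb) = col d I y" .
      have "sumA d I (map (\<lambda>(a, b). mulA d I (mulA d I a (fA d I m)) b) [(clsA d I xa, clsA d I yb)])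
          = addA d I (col d I y) (zeroA d I)" using 1 2 unfolding sumA_def by simp
      also have "\<dots> = col d I y" unfolding zeroA_def col_def addA_cls by simp
      finally have "col d I y \<in> JA d I m" unfolding JA_def using ca
        by (intro CollectI exI[of _ "[(clsA d I xa, clsA d I yb)]"]) auto
      hence "mulA d I (col d I y) (eA d I 1) \<in> subN d I m" unfolding subN_def by blast
      thus ?thesis using mulA_col_e1[OF assms(2)] u by simp
    qed
  qed
qed

lemma cosQ_col: assumes "m \<le> d" "1 \<le> d"
  shows "cosQ d I m (col d I y) = {col d I z | z. \<forall>i\<in>{1..d}. z i - y i \<in> I i (m+1)}"
proof
  show "cosQ d I m (col d I y) \<subseteq> {col d I z | z. \<forall>i\<in>{1..d}. z i - y i \<in> I i (m+1)}"
  proof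
    fix u assume "u \<in> cosQ d I m (col d I y)"
    then obtain w where "u = addA d I (col d I y) (col d I w)" "\<forall>i\<in>{1..d}. w i \<in> I i (m+1)"
      unfolding cosQ_def subN_eq[OF assms] by blast
    thus "u \<in> {col d I z | z. \<forall>i\<in>{1..d}. z i - y i \<in> I i (m+1)}"
      unfolding addA_col by force
  qed
  show "{col d I z | z. \<forall>i\<in>{1..d}. z i - y i \<in> I i (m+1)} \<subseteq> cosQ d I m (col d I y)"
  proof
    fix u assume "u \<in> {col d I z | z. \<forall>i\<in>{1..d}. z i - y i \<in> I i (m+1)}"
    then obtain z where z: "u = col d I z" "\<forall>i\<in>{1..d}. z i - y i \<in> I i (m+1)" by blast
    have "u = addA d I (col d I y) (col d I (\<lambda>i. z i - y i))" unfolding addA_col z(1) by simp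
    moreover have "col d I (\<lambda>i. z i - y i) \<in> subN d I m" unfolding subN_eq[OF assms] using z(2) by blast
    ultimately show "u \<in> cosQ d I m (col d I y)" unfolding cosQ_def by blast
  qed
qed

lemma cosQ_eq_iff: assumes "m \<le> d" "1 \<le> d"
  shows "cosQ d I m (col d I y) = cosQ d I m (col d I y') \<longleftrightarrow> (\<forall>i\<in>{1..d}. y i - y' i \<in> I i (m+1))"
proof
  assume h: "cosQ d I m (col d I y) = cosQ d I m (col d I y')"
  have "col d I y \<in> cosQ d I m (col d I y)" unfolding cosQ_col[OF assms]
    using ideal_0[OF isI] assms unfolding inr_def by auto
  hence "col d I y \<in> cosQ d I m (col d I y')" using h by simp
  then obtain z where z: "col d I y = col d I z" "\<forall>i\<in>{1..d}. z i - y' i \<in> I i (m+1)"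
    unfolding cosQ_col[OF assms] by blast
  show "\<forall>i\<in>{1..d}. y i - y' i \<in> I i (m+1)"
  proof
    fix i assume i: "i \<in> {1..d}"
    have ii: "two_sided_ideal (I i (m+1))" using i assms isI by auto
    have "y i - z i \<in> I i (d+1)" using z(1) i unfolding col_eq_iff by blast
    hence a: "y i - z i \<in> I i (m+1)" using monoI[of i "m+1" "d+1"] i assms by auto
    have e: "y i - y' i = (y i - z i) + (z i - y' i)" by simp
    show "y i - y' i \<in> I i (m+1)" unfolding e by (rule ideal_add[OF ii a]) (use z(2) i in blast)
  qed
next
  assume h: "\<forall>i\<in>{1..d}. y i - y' i \<in> I i (m+1)"
  have "\<forall>i\<in>{1..d}. z i - y i \<in> I i (m+1) \<longleftrightarrow> z i - y' i \<in> I i (m+1)" for z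
  proof
    fix i assume i: "i \<in> {1..d}"
    have ii: "two_sided_ideal (I i (m+1))" using i assms isI by auto
    have e1: "z i - y' i = (z i - y i) + (y i - y' i)" and e2: "z i - y i = (z i - y' i) - (y i - y' i)" by simp_all
    show "z i - y i \<in> I i (m+1) \<longleftrightarrow> z i - y' i \<in> I i (m+1)"
      using ideal_add[OF ii] ideal_diff[OF ii] h i e1 e2 by metis
  qed
  thus "cosQ d I m (col d I y) = cosQ d I m (col d I y')" unfolding cosQ_col[OF assms] by blast
qed

lemma rep_cosQ: assumes "m \<le> d" "1 \<le> d"
  shows "\<exists>z. rep (cosQ d I m (col d I y)) = col d I z \<and> (\<forall>i\<in>{1..d}. z i - y i \<in> I i (m+1))"
proof -
  have "col d I y \<in> cosQ d I m (col d I y)" unfolding cosQ_col[OF assms]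
    using ideal_0[OF isI] assms unfolding inr_def by auto
  hence "rep (cosQ d I m (col d I y)) \<in> cosQ d I m (col d I y)" unfolding rep_def by (rule someI[where P="\<lambda>x. x \<in> cosQ d I m (col d I y)"])
  thus ?thesis unfolding cosQ_col[OF assms] by blast
qed

lemma clsT_eq_iff: assumes "1 \<le> l" "l \<le> d + 1"
  shows "clsT d I l y = clsT d I l y' \<longleftrightarrow> (\<forall>i\<in>{1..d}. y i - y' i \<in> I i (d + 2 - l))"
proof
  assume h: "clsT d I l y = clsT d I l y'"
  show "\<forall>i\<in>{1..d}. y i - y' i \<in> I i (d + 2 - l)"
  proof
    fix i assume i: "i \<in> {1..d}"
    have ii: "two_sided_ideal (I i (d + 2 - l))" using i assms isI by auto
    from h have "clsT d I l y i = clsT d I l y' i" by simp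
    hence "cos (I i (d + 2 - l)) (y i) = cos (I i (d + 2 - l)) (y' i)" using i unfolding clsT_def by simp
    thus "y i - y' i \<in> I i (d + 2 - l)" using cos_eq[OF ii] by blast
  qed
next
  assume h: "\<forall>i\<in>{1..d}. y i - y' i \<in> I i (d + 2 - l)"
  show "clsT d I l y = clsT d I l y'"
  proof
    fix i show "clsT d I l y i = clsT d I l y' i"
    proof (cases "i \<in> {1..d}")
      case True
      have ii: "two_sided_ideal (I i (d + 2 - l))" using True assms isI by auto
      show ?thesis unfolding clsT_def using True h cos_eq[OF ii] by auto
    qed (auto simp: clsT_def)
  qed
qed

lemma rep_clsT: assumes "1 \<le> l" "l \<le> d + 1" "i \<in> {1..d}"
  shows "rep (clsT d I l y i) - y i \<in> I i (d + 2 - l)"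
proof -
  have ii: "two_sided_ideal (I i (d + 2 - l))" using assms isI by auto
  show ?thesis unfolding clsT_def using assms rep_cos[OF ii] by simp
qed

end

theorem lemma4p3:
  fixes d j :: nat and I :: "nat \<Rightarrow> nat \<Rightarrow> 'a::{ring,monoid_mult} set"
  assumes "d_system d I" and "1 \<le> j" and "j \<le> d"
  shows "\<exists>\<phi>. lmod_iso (carrierA d I) (carrierT d I j) (addT d I j) (actT d I j)
              (carrierQ d I (d + 1 - j)) (addQ d I (d + 1 - j)) (actQ d I (d + 1 - j)) \<phi>"
proof -
  note ds = assms(1)
  define m where "m = d + 1 - j"
  have d1: "1 \<le> d" and md: "m \<le> d" and hm: "d + 2 - j = m + 1" and jd: "j \<le> d + 1"
    using assms(2,3) unfolding m_def by auto
  define \<phi> where "\<phi> = (\<lambda>t. cosQ d I m (col d I (\<lambda>i. rep (t i))))"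
  have Tiff: "clsT d I j y = clsT d I j y' \<longleftrightarrow> (\<forall>i\<in>{1..d}. y i - y' i \<in> I i (m+1))" for y y'
    using clsT_eq_iff[OF ds assms(2) jd] hm by simp
  have repT: "rep (clsT d I j y i) - y i \<in> I i (m+1)" if "i \<in> {1..d}" for y i
    using rep_clsT[OF ds assms(2) jd that] hm by simp
  have Qiff: "cosQ d I m (col d I y) = cosQ d I m (col d I y') \<longleftrightarrow> (\<forall>i\<in>{1..d}. y i - y' i \<in> I i (m+1))" for y y'
    by (rule cosQ_eq_iff[OF ds md d1])
  have Im: "two_sided_ideal (I i (m+1))" if "i \<in> {1..d}" for i using isI[OF ds] that md by auto
  have phi: "\<phi> (clsT d I j y) = cosQ d I m (col d I y)" for y
    unfolding \<phi>_def Qiff using repT by blast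
  have bij: "bij_betw \<phi> (carrierT d I j) (carrierQ d I (d + 1 - j))"
    unfolding bij_betw_def
  proof
    show "inj_on \<phi> (carrierT d I j)"
    proof (rule inj_onI)
      fix s t assume "s \<in> carrierT d I j" "t \<in> carrierT d I j" and h: "\<phi> s = \<phi> t"
      then obtain y z where yz: "s = clsT d I j y" "t = clsT d I j z" unfolding carrierT_def by blast
      show "s = t" using h unfolding yz phi Qiff Tiff .
    qed
    have "\<phi> ` carrierT d I j = (\<lambda>y. cosQ d I m (col d I y)) ` UNIV"
      unfolding carrierT_def image_image phi ..
    also have "\<dots> = carrierQ d I (d + 1 - j)" unfolding carrierQ_def Ae1_eq[OF ds d1] m_def[symmetric]
      by (simp add: image_image)
    finally show "\<phi> ` carrierT d I j = carrierQ d I (d + 1 - j)" .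
  qed
  have add: "\<phi> (addT d I j s t) = addQ d I (d + 1 - j) (\<phi> s) (\<phi> t)"
    if st: "s \<in> carrierT d I j" "t \<in> carrierT d I j" for s t
  proof -
    obtain y z where yz: "s = clsT d I j y" "t = clsT d I j z" using st unfolding carrierT_def by blast
    obtain y2 where y2: "rep (cosQ d I m (col d I y)) = col d I y2" "\<forall>i\<in>{1..d}. y2 i - y i \<in> I i (m+1)"
      using rep_cosQ[OF ds md d1] by blast
    obtain z2 where z2: "rep (cosQ d I m (col d I z)) = col d I z2" "\<forall>i\<in>{1..d}. z2 i - z i \<in> I i (m+1)"
      using rep_cosQ[OF ds md d1] by blast
    have "addQ d I (d + 1 - j) (\<phi> s) (\<phi> t) = cosQ d I m (col d I (\<lambda>i. y2 i + z2 i))"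
      unfolding addQ_def m_def[symmetric] yz phi y2(1) z2(1) addA_col[OF ds] ..
    also have "\<dots> = cosQ d I m (col d I (\<lambda>k. rep (s k) + rep (t k)))"
      unfolding Qiff
    proof
      fix i assume i: "i \<in> {1..d}"
      have e: "y2 i + z2 i - (rep (s i) + rep (t i))
         = (y2 i - y i) + (z2 i - z i) - ((rep (s i) - y i) + (rep (t i) - z i))" by (simp add: algebra_simps)
      show "y2 i + z2 i - (rep (s i) + rep (t i)) \<in> I i (m + 1)" unfolding e
        using ideal_add[OF Im[OF i]] ideal_diff[OF Im[OF i]] y2(2) z2(2) repT[OF i] i yz by metis
    qed
    also have "\<dots> = \<phi> (addT d I j s t)" unfolding addT_def phi ..
    finally show ?thesis by simp
  qed
  have act: "\<phi> (actT d I j a t) = actQ d I (d + 1 - j) a (\<phi> t)"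
    if a: "a \<in> carrierA d I" and t: "t \<in> carrierT d I j" for a t
  proof -
    obtain y where yz: "t = clsT d I j y" using t unfolding carrierT_def by blast
    obtain x where x: "a = clsA d I x" "\<And>i j. inr d i j \<Longrightarrow> x i j \<in> I i j"
      using a unfolding carrierA_def by blast
    obtain y2 where y2: "rep (cosQ d I m (col d I y)) = col d I y2" "\<forall>i\<in>{1..d}. y2 i - y i \<in> I i (m+1)"
      using rep_cosQ[OF ds md d1] by blast
    have mc: "mulA d I (clsA d I x) (col d I y2) = col d I (\<lambda>i. \<Sum>k\<in>{1..d}. x i k * y2 k)"
      by (rule mulA_col[OF ds]) (rule x(2))
    have "actQ d I (d + 1 - j) a (\<phi> t) = cosQ d I m (col d I (\<lambda>i. \<Sum>k\<in>{1..d}. x i k * y2 k))"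
      unfolding actQ_def m_def[symmetric] yz phi y2(1) x(1) mc ..
    also have "\<dots> = cosQ d I m (col d I (\<lambda>i. \<Sum>k\<in>{1..d}. rep (a i k) * rep (t k)))"
      unfolding Qiff
    proof
      fix i assume i: "i \<in> {1..d}"
      have "(\<Sum>k\<in>{1..d}. rep (a i k) * rep (t k)) - (\<Sum>k\<in>{1..d}. x i k * y2 k) \<in> I i (m+1)"
        unfolding sum_subtractf[symmetric]
      proof (rule ideal_sum[OF Im[OF i]])
        fix k assume k: "k \<in> {1..d}"
        have r: "inr d i k" using i k unfolding inr_def by auto
        have pq: "rep (t k) - y2 k \<in> I k (m+1)"
        proof -
          have e: "rep (t k) - y2 k = (rep (t k) - y k) - (y2 k - y k)" by simp
          show ?thesis unfolding e using ideal_diff[OF Im[OF k]] repT[OF k] y2(2) k yz by metis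
        qed
        show "rep (a i k) * rep (t k) - x i k * y2 k \<in> I i (m+1)"
          apply (rule key[OF ds])
          using i k md x(2)[OF r] rep_clsA[OF ds r, of x] x(1) pq by auto
      qed
      thus "(\<Sum>k\<in>{1..d}. x i k * y2 k) - (\<Sum>k\<in>{1..d}. rep (a i k) * rep (t k)) \<in> I i (m + 1)"
        using ideal_neg[OF Im[OF i]] by (metis minus_diff_eq)
    qed
    also have "\<dots> = \<phi> (actT d I j a t)" unfolding actT_def phi ..
    finally show ?thesis by simp
  qed
  show ?thesis unfolding lmod_iso_def m_def[symmetric]
    using bij add act unfolding m_def[symmetric] by blast
qed

end
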